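(* The set $$S=\{(p,q)\in(0,1)^2:\ \mathbb{P}^{(1,1)}_{p,q}(\tau=+\infty)>0\}$$ is an open subset of $(0,1)^2$.
   Context: Cooperative model: for $p,q\in(0,1)$, a Markov chain $(X_n,Y_n)_{n\ge0}$ on $\mathbb{N}^2$ whose transition law from state $(x,y)$ is $\mu_{(x,y)}=\mathrm{Bin}(2,q)^{*(x+y)}\otimes\mathrm{Bin}(2,p)^{*\min(x,y)}$, i.e. given the past, $X_{n+1}\sim\mathrm{Bin}(2(X_n+Y_n),q)$ and $Y_{n+1}\sim\mathrm{Bin}(2\min(X_n,Y_n),p)$ are independent. $\mathbb{P}^{(x,y)}_{p,q}$ denotes the law of this process started from $(x,y)$. $Z_n=\min(X_n,Y_n)$ and $\tau=\inf\{n\ge0: Z_n=0\}$. *)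

theory Defs
  imports "HOL-Probability.Probability"
begin

text \<open>One-step transition law of the cooperative model from state (x,y):
  X' ~ Bin(2(x+y), q) and Y' ~ Bin(2 min(x,y), p), independent.
  (Bin(2,q)^{*(x+y)} = Bin(2(x+y),q).)\<close>
definition coop_step :: "real \<Rightarrow> real \<Rightarrow> nat \<times> nat \<Rightarrow> (nat \<times> nat) pmf" where
  "coop_step p q s = pair_pmf (binomial_pmf (2 * (fst s + snd s)) q)
                              (binomial_pmf (2 * min (fst s) (snd s)) p)"

text \<open>coop_surv p q n s = P^s_{p,q}(Z_0 \<noteq> 0, ..., Z_n \<noteq> 0) = P^s_{p,q}(tau > n),
  computed by the Markov property (first-step decomposition).\<close>
fun coop_surv :: "real \<Rightarrow> real \<Rightarrow> nat \<Rightarrow> nat \<times> nat \<Rightarrow> real" where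
  "coop_surv p q 0 s = (if min (fst s) (snd s) = 0 then 0 else 1)"
| "coop_surv p q (Suc n) s = (if min (fst s) (snd s) = 0 then 0
      else measure_pmf.expectation (coop_step p q s) (coop_surv p q n))"

text \<open>P^s_{p,q}(tau = +infinity) = inf_n P^s_{p,q}(tau > n) (continuity from above,
  the events {tau > n} being decreasing).\<close>
definition coop_survival_prob :: "real \<Rightarrow> real \<Rightarrow> nat \<times> nat \<Rightarrow> real" where
  "coop_survival_prob p q s = (INF n. coop_surv p q n s)"

end

theory Submission
  imports Defs
begin

definition bw :: "nat \<Rightarrow> real \<Rightarrow> nat \<Rightarrow> real" where
  "bw n p k = real (n choose k) * p^k * (1-p)^(n-k)"
definition bsum :: "nat \<Rightarrow> real \<Rightarrow> (nat \<Rightarrow> real) \<Rightarrow> real" where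
  "bsum n p g = (\<Sum>k\<le>n. bw n p k * g k)"

lemma bw_nonneg: "0 \<le> p \<Longrightarrow> p \<le> 1 \<Longrightarrow> 0 \<le> bw n p k"
  by (simp add: bw_def)

lemma bsum_add: "bsum n p (\<lambda>k. f k + g k) = bsum n p f + bsum n p g"
  by (simp add: bsum_def sum.distrib algebra_simps)

lemma bsum_cmult: "bsum n p (\<lambda>k. c * f k) = c * bsum n p f"
  unfolding bsum_def sum_distrib_left by (rule sum.cong) auto

lemma bsum_multc: "bsum n p (\<lambda>k. f k * c) = bsum n p f * c"
  using bsum_cmult[of n p c f] by (simp add: mult.commute)

lemma bsum_const: "bsum n p (\<lambda>_. c) = c"
proof -
  have "(\<Sum>k\<le>n. bw n p k) = (p + (1-p))^n"
    by (subst binomial_ring) (simp add: bw_def atLeast0AtMost)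
  then show ?thesis by (simp add: bsum_def sum_distrib_right[symmetric])
qed

lemma bsum_mono: "0 \<le> p \<Longrightarrow> p \<le> 1 \<Longrightarrow> (\<And>k. f k \<le> g k) \<Longrightarrow> bsum n p f \<le> bsum n p g"
  unfolding bsum_def by (intro sum_mono mult_left_mono) (auto simp: bw_nonneg)

lemma bw_Suc_Suc: "bw (Suc n) p (Suc j) = p * bw n p j + (1-p) * bw n p (Suc j)"
proof (cases "j < n")
  case True
  then have "n - j = Suc (n - Suc j)" by simp
  then show ?thesis by (simp add: bw_def algebra_simps)
next
  case False
  then have "n choose Suc j = 0" by simp
  with False show ?thesis by (simp add: bw_def algebra_simps)
qed

lemma bw_Suc_0: "bw (Suc n) p 0 = (1-p) * bw n p 0"
  by (simp add: bw_def)

lemma bw_gt: "n < k \<Longrightarrow> bw n p k = 0"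
  by (simp add: bw_def)

lemma bsum_Suc: "bsum (Suc n) p g = (1-p) * bsum n p g + p * bsum n p (\<lambda>k. g (Suc k))"
proof -
  have e1: "bsum n p g = (\<Sum>k\<le>Suc n. bw n p k * g k)"
    by (simp add: bsum_def bw_gt)
  have "bsum (Suc n) p g = bw (Suc n) p 0 * g 0 + (\<Sum>j\<le>n. bw (Suc n) p (Suc j) * g (Suc j))"
    unfolding bsum_def by (subst sum.atMost_Suc_shift) simp
  also have "(\<Sum>j\<le>n. bw (Suc n) p (Suc j) * g (Suc j)) = p * (\<Sum>j\<le>n. bw n p j * g (Suc j)) + (1-p) * (\<Sum>j\<le>n. bw n p (Suc j) * g (Suc j))"
    by (simp add: bw_Suc_Suc distrib_right sum.distrib sum_distrib_left mult.assoc)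
  also have "bw (Suc n) p 0 * g 0 + (p * (\<Sum>j\<le>n. bw n p j * g (Suc j)) + (1-p) * (\<Sum>j\<le>n. bw n p (Suc j) * g (Suc j))) = (1-p) * (bw n p 0 * g 0 + (\<Sum>j\<le>n. bw n p (Suc j) * g (Suc j)))
       + p * (\<Sum>j\<le>n. bw n p j * g (Suc j))"
    by (simp add: bw_Suc_0 algebra_simps)
  also have "bw n p 0 * g 0 + (\<Sum>j\<le>n. bw n p (Suc j) * g (Suc j)) = bsum n p g"
    unfolding e1 by (subst sum.atMost_Suc_shift) simp
  finally show ?thesis by (simp add: bsum_def)
qed

lemma bsum_conv: "bsum (m+n) p g = bsum m p (\<lambda>a. bsum n p (\<lambda>b. g (a+b)))"
proof (induction m arbitrary: g)
  case 0
  then show ?case by (simp add: bsum_def bw_def)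
next
  case (Suc m)
  have "bsum (Suc m + n) p g = (1-p) * bsum (m+n) p g + p * bsum (m+n) p (\<lambda>k. g (Suc k))"
    by (simp add: bsum_Suc)
  also have "\<dots> = (1-p) * bsum m p (\<lambda>a. bsum n p (\<lambda>b. g (a+b)))
     + p * bsum m p (\<lambda>a. bsum n p (\<lambda>b. g (Suc a+b)))"
    by (simp add: Suc.IH)
  also have "\<dots> = bsum (Suc m) p (\<lambda>a. bsum n p (\<lambda>b. g (a+b)))"
    by (simp add: bsum_Suc)
  finally show ?case .
qed

lemma bsum_swap: "bsum m p (\<lambda>x. bsum n q (\<lambda>y. g x y)) = bsum n q (\<lambda>y. bsum m p (\<lambda>x. g x y))"
  unfolding bsum_def sum_distrib_left
  by (subst sum.swap) (simp add: algebra_simps)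

lemma bsum_anti:
  assumes "0 \<le> p" "p \<le> 1" "m \<le> m'" "\<And>a b. a \<le> b \<Longrightarrow> g b \<le> g a"
  shows "bsum m' p g \<le> bsum m p g"
proof -
  obtain d where d: "m' = m + d" using assms(3) le_Suc_ex by blast
  have "bsum m' p g = bsum m p (\<lambda>a. bsum d p (\<lambda>b. g (a+b)))" by (simp add: d bsum_conv)
  also have "\<dots> \<le> bsum m p (\<lambda>a. bsum d p (\<lambda>b. g a))"
    by (intro bsum_mono assms) auto
  also have "\<dots> = bsum m p g" by (simp add: bsum_const)
  finally show ?thesis .
qed


definition E2 :: "real \<Rightarrow> real \<Rightarrow> nat \<Rightarrow> nat \<Rightarrow> (nat \<times> nat \<Rightarrow> real) \<Rightarrow> real" where
  "E2 p q a b f = bsum a q (\<lambda>i. bsum b p (\<lambda>j. f (i, j)))"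

lemma E2_add: "E2 p q a b (\<lambda>t. f t + g t) = E2 p q a b f + E2 p q a b g"
  by (simp add: E2_def bsum_add)

lemma E2_cmult: "E2 p q a b (\<lambda>t. c * f t) = c * E2 p q a b f"
  by (simp add: E2_def bsum_cmult)

lemma E2_multc: "E2 p q a b (\<lambda>t. f t * c) = E2 p q a b f * c"
  by (simp add: E2_def bsum_multc)

lemma E2_const: "E2 p q a b (\<lambda>_. c) = c"
  by (simp add: E2_def bsum_const)

lemma E2_mono: "0 \<le> p \<Longrightarrow> p \<le> 1 \<Longrightarrow> 0 \<le> q \<Longrightarrow> q \<le> 1 \<Longrightarrow> (\<And>t. f t \<le> g t)
   \<Longrightarrow> E2 p q a b f \<le> E2 p q a b g"
  unfolding E2_def by (intro bsum_mono) auto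

lemma E2_anti:
  assumes "0 \<le> p" "p \<le> 1" "0 \<le> q" "q \<le> 1" "a \<le> a'" "b \<le> b'"
    and anti: "\<And>i i' j j'. i \<le> i' \<Longrightarrow> j \<le> j' \<Longrightarrow> f (i', j') \<le> f (i, j)"
  shows "E2 p q a' b' f \<le> E2 p q a b f"
proof -
  have "E2 p q a' b' f \<le> bsum a' q (\<lambda>i. bsum b p (\<lambda>j. f (i, j)))"
    unfolding E2_def using assms by (intro bsum_mono bsum_anti) auto
  also have "\<dots> \<le> E2 p q a b f"
    unfolding E2_def using assms by (intro bsum_anti bsum_mono) auto
  finally show ?thesis .
qed

lemma E2_conv: "E2 p q (a1 + a2) (b1 + b2) f =
   E2 p q a1 b1 (\<lambda>t. E2 p q a2 b2 (\<lambda>u. f (fst t + fst u, snd t + snd u)))"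
proof -
  have "E2 p q (a1 + a2) (b1 + b2) f =
     bsum a1 q (\<lambda>i1. bsum a2 q (\<lambda>i2. bsum b1 p (\<lambda>j1. bsum b2 p (\<lambda>j2. f (i1+i2, j1+j2)))))"
    unfolding E2_def by (simp add: bsum_conv[of a1 a2] bsum_conv[of b1 b2])
  also have "\<dots> = bsum a1 q (\<lambda>i1. bsum b1 p (\<lambda>j1. bsum a2 q (\<lambda>i2. bsum b2 p (\<lambda>j2. f (i1+i2, j1+j2)))))"
    by (subst bsum_swap) simp
  finally show ?thesis by (simp add: E2_def)
qed

definition Est :: "real \<Rightarrow> real \<Rightarrow> nat \<times> nat \<Rightarrow> (nat \<times> nat \<Rightarrow> real) \<Rightarrow> real" where
  "Est p q s f = E2 p q (2 * (fst s + snd s)) (2 * min (fst s) (snd s)) f"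

lemma step_exp:
  assumes "0 \<le> p" "p \<le> 1" "0 \<le> q" "q \<le> 1"
  shows "measure_pmf.expectation (coop_step p q s) f = Est p q s f"
proof -
  define a where "a = 2 * (fst s + snd s)"
  define b where "b = 2 * min (fst s) (snd s)"
  have cs: "coop_step p q s = pair_pmf (binomial_pmf a q) (binomial_pmf b p)"
    by (simp add: coop_step_def a_def b_def)
  have "measure_pmf.expectation (coop_step p q s) f = (\<Sum>t\<in>{..a}\<times>{..b}. f t * pmf (coop_step p q s) t)"
  proof (rule integral_measure_pmf_real)
    fix t assume "t \<in> set_pmf (coop_step p q s)"
    then have "pmf (coop_step p q s) t \<noteq> 0" by (simp add: set_pmf_iff)
    then show "t \<in> {..a}\<times>{..b}" using assms
      by (cases t) (auto simp: cs pmf_pair)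
  qed simp
  also have "\<dots> = (\<Sum>t\<in>{..a}\<times>{..b}. f t * (bw a q (fst t) * bw b p (snd t)))"
    using assms by (intro sum.cong) (auto simp: cs pmf_pair bw_def)
  also have "\<dots> = (\<Sum>i\<le>a. \<Sum>j\<le>b. f (i, j) * (bw a q i * bw b p j))"
    by (simp add: sum.cartesian_product case_prod_beta)
  also have "\<dots> = Est p q s f"
    unfolding Est_def E2_def bsum_def a_def[symmetric] b_def[symmetric] sum_distrib_left
    by (intro sum.cong refl) (simp add: algebra_simps)
  finally show ?thesis .
qed

fun F :: "real \<Rightarrow> real \<Rightarrow> nat \<Rightarrow> (nat \<Rightarrow> real) \<Rightarrow> nat \<times> nat \<Rightarrow> real" where
  "F p q 0 h s = h (min (fst s) (snd s))"
| "F p q (Suc N) h s = (if min (fst s) (snd s) = 0 then h 0 else Est p q s (F p q N h))"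

lemma surv_F:
  assumes "0 \<le> p" "p \<le> 1" "0 \<le> q" "q \<le> 1"
  shows "coop_surv p q n s = F p q n (\<lambda>z. if z = 0 then 0 else 1) s"
proof (induction n arbitrary: s)
  case 0
  then show ?case by simp
next
  case (Suc n)
  have e: "coop_surv p q n = F p q n (\<lambda>z. if z = 0 then 0 else 1)" using Suc.IH by (intro ext)
  show ?case by (auto simp: step_exp[OF assms] e min_def)
qed

lemma F_add: "F p q N (\<lambda>z. h1 z + h2 z) s = F p q N h1 s + F p q N h2 s"
proof (induction N arbitrary: s)
  case (Suc N)
  have e: "F p q N (\<lambda>z. h1 z + h2 z) = (\<lambda>t. F p q N h1 t + F p q N h2 t)" using Suc.IH by (intro ext)
  show ?case by (auto simp: e Est_def E2_add min_def)
qed simp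

lemma F_cmult: "F p q N (\<lambda>z. c * h z) s = c * F p q N h s"
proof (induction N arbitrary: s)
  case (Suc N)
  have e: "F p q N (\<lambda>z. c * h z) = (\<lambda>t. c * F p q N h t)" using Suc.IH by (intro ext)
  show ?case by (auto simp: e Est_def E2_cmult min_def)
qed simp

lemma F_const: "F p q N (\<lambda>z. c) s = c"
proof (induction N arbitrary: s)
  case (Suc N)
  have e: "F p q N (\<lambda>z. c) = (\<lambda>t. c)" using Suc.IH by (intro ext)
  show ?case by (auto simp: e Est_def E2_const min_def)
qed simp

lemma F_mono:
  assumes "0 \<le> p" "p \<le> 1" "0 \<le> q" "q \<le> 1" "\<And>z. h1 z \<le> h2 z"
  shows "F p q N h1 s \<le> F p q N h2 s"
  using assms(5) by (induction N arbitrary: s) (auto simp: Est_def intro!: E2_mono assms(1-4))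


lemma min0 [simp]: "(min (a::nat) b = 0) = (a = 0 \<or> b = 0)"
  by auto

lemma F_diff: "F p q N (\<lambda>z. h1 z - h2 z) s = F p q N h1 s - F p q N h2 s"
  using F_add[of p q N h1 "\<lambda>z. (-1) * h2 z" s] F_cmult[of p q N "-1" h2 s] by simp

definition Pe :: "real \<Rightarrow> real \<Rightarrow> nat \<Rightarrow> nat \<times> nat \<Rightarrow> real" where
  "Pe p q n s = F p q n (\<lambda>z. if z = 0 then 1 else 0) s"

lemma Pe_0: "Pe p q 0 s = (if min (fst s) (snd s) = 0 then 1 else 0)"
  by (simp add: Pe_def)

lemma Pe_Suc: "Pe p q (Suc n) s = (if min (fst s) (snd s) = 0 then 1 else Est p q s (Pe p q n))"
proof -
  have "Pe p q n = F p q n (\<lambda>z. if z = 0 then 1 else 0)" by (intro ext) (simp add: Pe_def)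
  then show ?thesis by (simp add: Pe_def)
qed

context
  fixes p q :: real
  assumes pq: "0 \<le> p" "p \<le> 1" "0 \<le> q" "q \<le> 1"
begin

lemma surv_Pe: "coop_surv p q n s = 1 - Pe p q n s"
proof -
  have "(\<lambda>z::nat. if z = 0 then 0 else 1::real) = (\<lambda>z. 1 - (if z = 0 then 1 else 0))"
    by auto
  then show ?thesis
    by (simp add: surv_F[OF pq] F_diff F_const Pe_def)
qed

lemma Pe_ge0: "0 \<le> Pe p q n s"
  using F_mono[OF pq, of "\<lambda>_. 0" "\<lambda>z. if z = 0 then 1 else 0" n s]
  by (simp add: Pe_def F_const)

lemma Pe_le1: "Pe p q n s \<le> 1"
  using F_mono[OF pq, of "\<lambda>z. if z = 0 then 1 else 0" "\<lambda>_. 1" n s]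
  by (simp add: Pe_def F_const)

lemma Pe_anti: "fst s \<le> fst s' \<Longrightarrow> snd s \<le> snd s' \<Longrightarrow> Pe p q n s' \<le> Pe p q n s"
proof (induction n arbitrary: s s')
  case 0
  then show ?case by (auto simp: Pe_0 min_def)
next
  case (Suc n)
  show ?case
  proof (cases "min (fst s) (snd s) = 0")
    case True
    then show ?thesis using Pe_le1[of "Suc n" s'] by (simp add: Pe_Suc)
  next
    case False
    then have "min (fst s') (snd s') \<noteq> 0" using Suc.prems by auto
    then have "Pe p q (Suc n) s' = Est p q s' (Pe p q n)" by (simp add: Pe_Suc)
    also have "\<dots> \<le> Est p q s (Pe p q n)"
      unfolding Est_def using Suc.prems
      by (intro E2_anti pq Suc.IH) (auto simp: min_def)
    also have "\<dots> = Pe p q (Suc n) s" using False by (simp add: Pe_Suc)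
    finally show ?thesis .
  qed
qed

lemma Pe_submult: "Pe p q n (fst s1 + fst s2, snd s1 + snd s2) \<le> Pe p q n s1 * Pe p q n s2"
proof (induction n arbitrary: s1 s2)
  case 0
  then show ?case by (auto simp: Pe_0 min_def)
next
  case (Suc n)
  let ?s = "(fst s1 + fst s2, snd s1 + snd s2)"
  show ?case
  proof (cases "min (fst s1) (snd s1) = 0 \<or> min (fst s2) (snd s2) = 0")
    case True
    then show ?thesis
    proof
      assume "min (fst s1) (snd s1) = 0"
      then show ?thesis using Pe_anti[of s2 ?s "Suc n"] by (simp add: Pe_Suc)
    next
      assume "min (fst s2) (snd s2) = 0"
      then show ?thesis using Pe_anti[of s1 ?s "Suc n"] by (simp add: Pe_Suc)
    qed
  next
    case False
    define a1 where "a1 = 2 * (fst s1 + snd s1)"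
    define a2 where "a2 = 2 * (fst s2 + snd s2)"
    define b1 where "b1 = 2 * min (fst s1) (snd s1)"
    define b2 where "b2 = 2 * min (fst s2) (snd s2)"
    have ms: "min (fst ?s) (snd ?s) \<noteq> 0" using False by auto
    have "Pe p q (Suc n) ?s = E2 p q (a1 + a2) (2 * min (fst ?s) (snd ?s)) (Pe p q n)"
      unfolding Pe_Suc if_not_P[OF ms] by (simp add: Est_def a1_def a2_def algebra_simps)
    also have "\<dots> \<le> E2 p q (a1 + a2) (b1 + b2) (Pe p q n)"
      by (intro E2_anti pq Pe_anti) (auto simp: b1_def b2_def min_def)
    also have "\<dots> = E2 p q a1 b1 (\<lambda>t. E2 p q a2 b2 (\<lambda>u. Pe p q n (fst t + fst u, snd t + snd u)))"
      by (rule E2_conv)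
    also have "\<dots> \<le> E2 p q a1 b1 (\<lambda>t. E2 p q a2 b2 (\<lambda>u. Pe p q n t * Pe p q n u))"
      by (intro E2_mono pq Suc.IH)
    also have "\<dots> = E2 p q a1 b1 (Pe p q n) * E2 p q a2 b2 (Pe p q n)"
      by (simp add: E2_cmult E2_multc)
    also have "\<dots> = Pe p q (Suc n) s1 * Pe p q (Suc n) s2"
      using False by (simp add: Pe_Suc Est_def a1_def a2_def b1_def b2_def)
    finally show ?thesis .
  qed
qed

lemma Pe_pow: "Pe p q n s \<le> Pe p q n (1,1) ^ min (fst s) (snd s)"
proof -
  have diag: "Pe p q n (z, z) \<le> Pe p q n (1,1) ^ z" for z
  proof (induction z)
    case 0
    then show ?case using Pe_le1 by simp
  next
    case (Suc z)
    have "Pe p q n (Suc z, Suc z) = Pe p q n (fst (1::nat,1::nat) + fst (z,z), snd (1::nat,1::nat) + snd (z,z))"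
      by simp
    also have "\<dots> \<le> Pe p q n (1,1) * Pe p q n (z,z)" by (rule Pe_submult)
    also have "\<dots> \<le> Pe p q n (1,1) * Pe p q n (1,1) ^ z"
      by (intro mult_left_mono Suc.IH Pe_ge0)
    finally show ?case by simp
  qed
  have "Pe p q n s \<le> Pe p q n (min (fst s) (snd s), min (fst s) (snd s))"
    by (rule Pe_anti) auto
  also have "\<dots> \<le> Pe p q n (1,1) ^ min (fst s) (snd s)" by (rule diag)
  finally show ?thesis .
qed

lemma Pe_shift: "Pe p q (N + n) s \<le> F p q N (\<lambda>z. Pe p q n (1,1) ^ z) s"
proof (induction N arbitrary: s)
  case 0
  then show ?case using Pe_pow by simp
next
  case (Suc N)
  show ?case
  proof (cases "min (fst s) (snd s) = 0")
    case True
    then show ?thesis by (simp add: Pe_Suc)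
  next
    case False
    then have "Pe p q (Suc N + n) s = Est p q s (Pe p q (N + n))" by (simp add: Pe_Suc)
    also have "\<dots> \<le> Est p q s (F p q N (\<lambda>z. Pe p q n (1,1) ^ z))"
      unfolding Est_def by (intro E2_mono pq Suc.IH)
    finally show ?thesis using False by simp
  qed
qed

lemma Pe_mono_Suc: "Pe p q n s \<le> Pe p q (Suc n) s"
proof (induction n arbitrary: s)
  case 0
  show ?case
    using E2_mono[OF pq, of "\<lambda>_. 0" "Pe p q 0"] Pe_ge0
    by (auto simp: Pe_Suc Pe_0 Est_def E2_const)
next
  case (Suc n)
  show ?case
    using E2_mono[OF pq, of "Pe p q n" "Pe p q (Suc n)"] Suc.IH
    by (subst (1 2) Pe_Suc) (auto simp: Est_def)
qed

lemma Pe_mono: "m \<le> n \<Longrightarrow> Pe p q m s \<le> Pe p q n s"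
  using Pe_mono_Suc by (rule lift_Suc_mono_le)


lemma suff:
  assumes "0 \<le> t0" "t0 < 1" "F p q N (\<lambda>z. t0 ^ z) (1,1) < t0"
  shows "Pe p q n (1,1) \<le> t0"
proof -
  have N: "N \<noteq> 0"
  proof
    assume "N = 0"
    then show False using assms(3) by simp
  qed
  have k: "Pe p q (k * N) (1,1) \<le> t0" for k
  proof (induction k)
    case 0
    then show ?case using assms(1) by (simp add: Pe_0)
  next
    case (Suc k)
    have "Pe p q (Suc k * N) (1,1) = Pe p q (N + k * N) (1,1)" by simp
    also have "\<dots> \<le> F p q N (\<lambda>z. Pe p q (k * N) (1,1) ^ z) (1,1)" by (rule Pe_shift)
    also have "\<dots> \<le> F p q N (\<lambda>z. t0 ^ z) (1,1)"
      by (intro F_mono pq power_mono Suc.IH Pe_ge0)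
    finally show ?case using assms(3) by simp
  qed
  have "Pe p q n (1,1) \<le> Pe p q (n * N) (1,1)"
    using N by (intro Pe_mono) simp
  then show ?thesis using k[of n] by simp
qed

lemma bsum_delta0: "bsum n r (\<lambda>j. if j = 0 then 1 else 0) = (1 - r) ^ n"
proof -
  have "bsum n r (\<lambda>j. if j = 0 then 1 else 0) = (\<Sum>k\<le>n. if k = 0 then bw n r k else 0)"
    unfolding bsum_def by (intro sum.cong) auto
  also have "\<dots> = bw n r 0" by (subst sum.delta) auto
  finally show ?thesis by (simp add: bw_def)
qed

lemma Pe_Suc_ge: "F p q N (\<lambda>z. if z = 0 then 1 else (1-p)^(2*z)) s \<le> Pe p q (Suc N) s"
proof (induction N arbitrary: s)
  case 0
  show ?case
  proof (cases "min (fst s) (snd s) = 0")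
    case True
    then show ?thesis by (simp add: Pe_Suc)
  next
    case False
    define a where "a = 2 * (fst s + snd s)"
    define b where "b = 2 * min (fst s) (snd s)"
    have "(1-p)^(2 * min (fst s) (snd s)) = E2 p q a b (\<lambda>t. if snd t = 0 then 1 else 0)"
      by (simp add: E2_def bsum_delta0 bsum_const b_def)
    also have "\<dots> \<le> E2 p q a b (Pe p q 0)"
      by (intro E2_mono pq) (auto simp: Pe_0)
    also have "\<dots> = Pe p q (Suc 0) s"
      unfolding Pe_Suc if_not_P[OF False] by (simp add: Est_def a_def b_def)
    finally show ?thesis using False by (simp)
  qed
next
  case (Suc N)
  show ?case
  proof (cases "min (fst s) (snd s) = 0")
    case True
    then show ?thesis by (simp add: Pe_Suc)
  next
    case False
    have "F p q (Suc N) (\<lambda>z. if z = 0 then 1 else (1-p)^(2*z)) s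
       = Est p q s (F p q N (\<lambda>z. if z = 0 then 1 else (1-p)^(2*z)))"
      using False by (simp)
    also have "\<dots> \<le> Est p q s (Pe p q (Suc N))"
      unfolding Est_def by (intro E2_mono pq Suc.IH)
    also have "\<dots> = Pe p q (Suc (Suc N)) s"
      unfolding Pe_Suc[of p q "Suc N"] if_not_P[OF False] ..
    finally show ?thesis .
  qed
qed

definition IK :: "nat \<Rightarrow> nat \<Rightarrow> real" where
  "IK K z = (if 1 \<le> z \<and> z \<le> K then 1 else 0)"

lemma Pe_incr:
  "Pe p q N (1,1) + (1-p)^(2*K) * F p q N (IK K) (1,1) \<le> Pe p q (Suc N) (1,1)"
proof -
  have "Pe p q N (1,1) + (1-p)^(2*K) * F p q N (IK K) (1,1)
      = F p q N (\<lambda>z. (if z = 0 then 1 else 0) + (1-p)^(2*K) * IK K z) (1,1)"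
    by (simp add: F_add F_cmult Pe_def)
  also have "\<dots> \<le> F p q N (\<lambda>z. if z = 0 then 1 else (1-p)^(2*z)) (1,1)"
  proof (intro F_mono pq)
    fix z :: nat
    show "(if z = 0 then 1 else 0) + (1-p)^(2*K) * IK K z \<le> (if z = 0 then 1 else (1-p)^(2*z))"
    proof (cases "1 \<le> z \<and> z \<le> K")
      case True
      then have "(1-p)^(2*K) \<le> (1-p)^(2*z)"
        using pq by (intro power_decreasing) auto
      then show ?thesis using True by (simp add: IK_def)
    next
      case False
      then show ?thesis using pq by (auto simp: IK_def)
    qed
  qed
  also have "\<dots> \<le> Pe p q (Suc N) (1,1)" by (rule Pe_Suc_ge)
  finally show ?thesis .
qed

lemma small_IK:
  assumes "p < 1" "0 < \<epsilon>"
  shows "\<exists>N. F p q N (IK K) (1,1) < \<epsilon>"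
proof (rule ccontr)
  assume "\<not> ?thesis"
  then have ge: "\<epsilon> \<le> F p q N (IK K) (1,1)" for N by (simp add: not_less)
  define \<delta> where "\<delta> = (1-p)^(2*K)"
  have d: "0 < \<delta>" using assms by (simp add: \<delta>_def)
  have lin: "real M * (\<delta> * \<epsilon>) \<le> Pe p q M (1,1)" for M
  proof (induction M)
    case 0
    then show ?case by (simp add: Pe_0)
  next
    case (Suc M)
    have "\<delta> * \<epsilon> \<le> \<delta> * F p q M (IK K) (1,1)" using d ge by simp
    then show ?case using Suc.IH Pe_incr[of M K] by (simp add: \<delta>_def algebra_simps)
  qed
  obtain M where "1 < real M * (\<delta> * \<epsilon>)"
    using ex_less_of_nat_mult[of "\<delta> * \<epsilon>" 1] d assms by auto
  then show False using lin[of M] Pe_le1[of M "(1,1)"] by simp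
qed

lemma pow_bound:
  assumes "0 \<le> t" "t \<le> 1"
  shows "t ^ z \<le> (if z = 0 then 1 else 0) + IK K z + t ^ Suc K"
proof (cases "z \<le> K")
  case True
  have "t ^ z \<le> 1" using assms by (simp add: power_le_one)
  moreover have "0 \<le> t ^ Suc K" using assms by simp
  ultimately show ?thesis using True by (auto simp: IK_def)
next
  case False
  have "t ^ z \<le> t ^ Suc K" using assms False by (intro power_decreasing) auto
  then show ?thesis using False by (auto simp: IK_def)
qed

lemma nec:
  assumes "p < 1" "c < 1" "\<And>n. Pe p q n (1,1) \<le> c"
  shows "\<exists>N t0. 0 \<le> t0 \<and> t0 < 1 \<and> F p q N (\<lambda>z. t0 ^ z) (1,1) < t0"
proof -
  have c0: "0 \<le> c" using assms(3)[of 0] by (simp add: Pe_0)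
  define \<epsilon> where "\<epsilon> = (1 - c) / 2"
  define t0 where "t0 = c + \<epsilon>"
  have e: "0 < \<epsilon>" using assms by (simp add: \<epsilon>_def)
  have t0: "0 \<le> t0" "t0 < 1" using c0 assms(2) unfolding t0_def \<epsilon>_def by (auto simp: field_simps)
  obtain K where K: "t0 ^ K < \<epsilon> / 2" using real_arch_pow_inv[of "\<epsilon>/2" t0] e t0 by auto
  have K': "t0 ^ Suc K \<le> t0 ^ K" using t0 by (intro power_decreasing) auto
  obtain N where N: "F p q N (IK K) (1,1) < \<epsilon> / 2" using small_IK[OF assms(1), of "\<epsilon>/2" K] e by auto
  have "F p q N (\<lambda>z. t0 ^ z) (1,1) \<le> F p q N (\<lambda>z. (if z = 0 then 1 else 0) + IK K z + t0 ^ Suc K) (1,1)"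
    using t0 by (intro F_mono pq pow_bound) auto
  also have "\<dots> = Pe p q N (1,1) + F p q N (IK K) (1,1) + t0 ^ Suc K"
    by (simp add: F_add F_const Pe_def)
  also have "\<dots> < t0" using assms(3)[of N] N K K' by (simp add: t0_def)
  finally show ?thesis using t0 by blast
qed

end

lemma F_cont: "continuous_on ({0<..<1} \<times> {0<..<1}) (\<lambda>x. F (fst x) (snd x) N h s)"
proof (induction N arbitrary: s)
  case 0
  then show ?case by simp
next
  case (Suc N)
  show ?case
  proof (cases "min (fst s) (snd s) = 0")
    case True
    then show ?thesis by (simp)
  next
    case False
    define a where "a = 2 * (fst s + snd s)"
    define b where "b = 2 * min (fst s) (snd s)"
    have e: "F (fst x) (snd x) (Suc N) h s = (\<Sum>i\<le>a. bw a (snd x) i * (\<Sum>j\<le>b. bw b (fst x) j * F (fst x) (snd x) N h (i, j)))" for x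
      using False by (simp add: Est_def E2_def bsum_def a_def b_def)
    show ?thesis unfolding e bw_def
      by (intro continuous_intros Suc.IH)
  qed
qed


lemma key:
  assumes "0 < p" "p < 1" "0 < q" "q < 1"
  shows "coop_survival_prob p q (1,1) > 0 \<longleftrightarrow>
         (\<exists>N t0. 0 \<le> t0 \<and> t0 < 1 \<and> F p q N (\<lambda>z. t0 ^ z) (1,1) < t0)"
proof -
  have pq: "0 \<le> p" "p \<le> 1" "0 \<le> q" "q \<le> 1" using assms by auto
  have bdd: "bdd_below (range (\<lambda>n. coop_surv p q n (1,1)))"
    by (rule bdd_belowI[of _ 0]) (auto simp: surv_Pe[OF pq] Pe_le1[OF pq])
  show ?thesis
  proof
    assume pos: "coop_survival_prob p q (1,1) > 0"
    have "Pe p q n (1,1) \<le> 1 - coop_survival_prob p q (1,1)" for n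
      using cINF_lower[OF bdd, of n] surv_Pe[OF pq, of n "(1,1)"]
      unfolding coop_survival_prob_def by simp
    then show "\<exists>N t0. 0 \<le> t0 \<and> t0 < 1 \<and> F p q N (\<lambda>z. t0 ^ z) (1,1) < t0"
      using nec[OF pq assms(2), of "1 - coop_survival_prob p q (1,1)"] pos by simp
  next
    assume "\<exists>N t0. 0 \<le> t0 \<and> t0 < 1 \<and> F p q N (\<lambda>z. t0 ^ z) (1,1) < t0"
    then obtain N t0 where t: "0 \<le> t0" "t0 < 1" "F p q N (\<lambda>z. t0 ^ z) (1,1) < t0" by blast
    have "1 - t0 \<le> coop_survival_prob p q (1,1)"
      unfolding coop_survival_prob_def
      using suff[OF pq t] by (intro cINF_greatest) (auto simp: surv_Pe[OF pq])
    then show "coop_survival_prob p q (1,1) > 0" using t by simp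
  qed
qed

theorem theorem6:
  "openin (top_of_set ({0<..<1::real} \<times> {0<..<1::real}))
     {(p, q). p \<in> {0<..<1} \<and> q \<in> {0<..<1} \<and> coop_survival_prob p q (1, 1) > 0}"
proof -
  define U where "U = ({0<..<1::real} \<times> {0<..<1::real})"
  define G where "G = (\<lambda>(N::nat, t0::real). U \<inter> (\<lambda>x. F (fst x) (snd x) N (\<lambda>z. t0 ^ z) (1,1) - t0) -` {..<0})"
  have eq: "{(p, q). p \<in> {0<..<1} \<and> q \<in> {0<..<1} \<and> coop_survival_prob p q (1, 1) > 0}
      = \<Union> (G ` (UNIV \<times> {0..<1}))"
  proof (intro equalityI subsetI)
    fix x assume "x \<in> {(p, q). p \<in> {0<..<1} \<and> q \<in> {0<..<1} \<and> coop_survival_prob p q (1, 1) > 0}"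
    then obtain p q where x: "x = (p, q)" "p \<in> {0<..<1}" "q \<in> {0<..<1}" "coop_survival_prob p q (1, 1) > 0"
      by blast
    then obtain N t0 where t: "0 \<le> t0" "t0 < 1" "F p q N (\<lambda>z. t0 ^ z) (1,1) < t0"
      using key[of p q] by auto
    have "x \<in> G (N, t0)" using x t by (simp add: G_def U_def)
    moreover have "(N, t0) \<in> UNIV \<times> {0..<1}" using t by simp
    ultimately show "x \<in> \<Union> (G ` (UNIV \<times> {0..<1}))" by blast
  next
    fix x assume "x \<in> \<Union> (G ` (UNIV \<times> {0..<1}))"
    then obtain N t0 where t: "0 \<le> t0" "t0 < 1" and xg: "x \<in> G (N, t0)" by auto
    obtain p q where x: "x = (p, q)" by (cases x)
    have pq: "p \<in> {0<..<1}" "q \<in> {0<..<1}" "F p q N (\<lambda>z. t0 ^ z) (1,1) < t0"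
      using xg x by (auto simp: G_def U_def)
    then have "coop_survival_prob p q (1, 1) > 0" using key[of p q] t by auto
    then show "x \<in> {(p, q). p \<in> {0<..<1} \<and> q \<in> {0<..<1} \<and> coop_survival_prob p q (1, 1) > 0}"
      using x pq by simp
  qed
  have "openin (top_of_set U) (G y)" for y
  proof (cases y)
    case (Pair N t0)
    show ?thesis unfolding Pair G_def split
      by (intro continuous_openin_preimage_gen continuous_intros F_cont[unfolded U_def[symmetric]] open_lessThan)
  qed
  then show ?thesis unfolding eq U_def[symmetric] by (intro openin_Union) auto
qed

end
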